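(* Let $n\ge2$, let $\mathcal{P}$ be a distribution on $\mathcal{Z}$, let $\ell:\mathbb{R}^K\times\mathcal{Z}\to[0,1]$, and let $\mathcal{A}:\mathcal{Z}^{n-1}\to\mathbb{R}^K$ be the deterministic algorithm that runs $T$ steps of SGD from a fixed initialization $w_0$ (the same for every training set), $w_{t+1}=G_t(w_t)$, where for every training set every update map $G_t$ is $\gamma$-bounded. For $\sigma>0$ let $\mathcal{A}_{\sigma^2I}(z)=\mathcal{A}(z)+N$, $N\sim\mathcal{N}(0,\sigma^2I_K)$. Then \[ \mathrm{gen}(\mathcal{A}_{\sigma^2I})\le\sqrt{\frac{c_n^2T^2\gamma}{\sigma^2}},\qquad c_n=\frac{n}{n-1}. \]
   Context: An update map $G:\mathbb{R}^K\to\mathbb{R}^K$ is $\gamma$-bounded if $\|G(w)-w\|\le\sqrt\gamma$ for all $w$. With $\mathcal{L}(w)=\mathbb{E}_{Z'\sim\mathcal{P}}\ell(w,Z')$ and $\widehat{\mathcal{L}}(w,z^m)=\frac1m\sum_i\ell(w,z_i)$, $\mathrm{gen}(\mathcal{A}_{\sigma^2I})=|\mathbb{E}[\mathcal{L}(\mathcal{A}_{\sigma^2I}(Z^{n-1}))-\widehat{\mathcal{L}}(\mathcal{A}_{\sigma^2I}(Z^{n-1}),Z^{n-1})]|$, $Z^{n-1}\sim\mathcal{P}^{n-1}$, expectation also over the noise. *)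

theory Defs
  imports "HOL-Probability.Probability"
begin

text \<open>Isotropic Gaussian N(0, sigma^2 I_K) on R^K (K = CARD('k)), given by its
  density with respect to Lebesgue measure; sigma is the standard deviation.\<close>
definition gaussian_iso :: "real \<Rightarrow> (real ^ 'k) measure" where
  "gaussian_iso \<sigma> = density lborel (\<lambda>x. ennreal (\<Prod>i\<in>UNIV. normal_density 0 \<sigma> (x $ i)))"

definition gamma_bounded :: "real \<Rightarrow> ('a::real_normed_vector \<Rightarrow> 'a) \<Rightarrow> bool" where
  "gamma_bounded \<gamma> G \<longleftrightarrow> (\<forall>w. norm (G w - w) \<le> sqrt \<gamma>)"

primrec sgd_iter :: "('s \<Rightarrow> nat \<Rightarrow> 'a \<Rightarrow> 'a) \<Rightarrow> 'a \<Rightarrow> 's \<Rightarrow> nat \<Rightarrow> 'a" where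
  "sgd_iter G w0 s 0 = w0"
| "sgd_iter G w0 s (Suc t) = G s t (sgd_iter G w0 s t)"

definition pop_risk :: "'z measure \<Rightarrow> ('w \<Rightarrow> 'z \<Rightarrow> real) \<Rightarrow> 'w \<Rightarrow> real" where
  "pop_risk P loss w = (\<integral>z. loss w z \<partial>P)"

definition emp_risk :: "('w \<Rightarrow> 'z \<Rightarrow> real) \<Rightarrow> 'w \<Rightarrow> nat \<Rightarrow> (nat \<Rightarrow> 'z) \<Rightarrow> real" where
  "emp_risk loss w m s = (1 / real m) * (\<Sum>i<m. loss w (s i))"

definition gen_noisy :: "'z measure \<Rightarrow> ((real ^ 'k) \<Rightarrow> 'z \<Rightarrow> real) \<Rightarrow> nat
    \<Rightarrow> ((nat \<Rightarrow> 'z) \<Rightarrow> real ^ 'k) \<Rightarrow> real \<Rightarrow> real" where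
  "gen_noisy P loss m A \<sigma> =
     \<bar>\<integral>p. (pop_risk P loss (A (fst p) + snd p) - emp_risk loss (A (fst p) + snd p) m (fst p))
        \<partial>(PiM {..<m} (\<lambda>_. P) \<Otimes>\<^sub>M gaussian_iso \<sigma>)\<bar>"

end

theory Submission
  imports Defs
begin

definition gd :: "real \<Rightarrow> real^'k \<Rightarrow> real^'k \<Rightarrow> real" where
  "gd \<sigma> c x = (\<Prod>i\<in>UNIV. normal_density (c$i) \<sigma> (x$i))"

lemma Basis_vec_real: "(Basis :: (real^'k) set) = range (\<lambda>i. axis i 1)"
  by (auto simp: Basis_vec_def)

lemma prod_Basis_vec: "(\<Prod>b\<in>(Basis :: (real^'k) set). F b) = (\<Prod>i\<in>UNIV. F (axis i 1))"
  unfolding Basis_vec_real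
  by (subst prod.reindex) (auto simp: inj_on_def axis_eq_axis)

lemma gd_nonneg: "0 \<le> gd \<sigma> c x"
  unfolding gd_def by (intro prod_nonneg) (auto simp: normal_density_nonneg)

lemma gd_meas[measurable]: "gd \<sigma> c \<in> borel_measurable borel"
  unfolding gd_def by measurable

lemma gd_nn: fixes c :: "real^'k" assumes "\<sigma> > 0" shows "(\<integral>\<^sup>+x. ennreal (gd \<sigma> c x) \<partial>lborel) = 1"
proof -
  have "(\<integral>\<^sup>+x. ennreal (gd \<sigma> c x) \<partial>lborel) =
     (\<integral>\<^sup>+x. (\<Prod>b\<in>Basis. ennreal (normal_density (c \<bullet> b) \<sigma> (x \<bullet> b))) \<partial>lborel)"
    by (simp add: gd_def prod_Basis_vec inner_axis prod_ennreal normal_density_nonneg)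
  also have "\<dots> = (\<Prod>b\<in>(Basis :: (real^'k) set). (\<integral>\<^sup>+x. ennreal (normal_density (c \<bullet> b) \<sigma> x) \<partial>lborel))"
    by (rule nn_integral_lborel_prod) auto
  also have "\<dots> = 1"
  proof (intro prod.neutral ballI)
    fix b :: "real^'k"
    interpret prob_space "density lborel (normal_density (c \<bullet> b) \<sigma>)"
      by (rule prob_space_normal_density[OF assms])
    show "(\<integral>\<^sup>+x. ennreal (normal_density (c \<bullet> b) \<sigma> x) \<partial>lborel) = 1"
      using emeasure_space_1 by (simp add: emeasure_density)
  qed
  finally show ?thesis .
qed

lemma sqrt_prod: "finite A \<Longrightarrow> (\<And>i. i \<in> A \<Longrightarrow> 0 \<le> f i) \<Longrightarrow> sqrt (\<Prod>i\<in>A. f i) = (\<Prod>i\<in>A. sqrt (f i))"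
  by (induction A rule: finite_induct) (auto simp: real_sqrt_mult)

lemma nd_bhatt:
  assumes "\<sigma> > 0"
  shows "sqrt (normal_density \<alpha> \<sigma> t * normal_density \<beta> \<sigma> t)
       = exp (-(\<alpha>-\<beta>)\<^sup>2/(8*\<sigma>\<^sup>2)) * normal_density ((\<alpha>+\<beta>)/2) \<sigma> t"
proof -
  let ?R = "exp (-(\<alpha>-\<beta>)\<^sup>2/(8*\<sigma>\<^sup>2)) * normal_density ((\<alpha>+\<beta>)/2) \<sigma> t"
  have e: "-(t - \<alpha>)\<^sup>2/ (2 * \<sigma>\<^sup>2) + -(t - \<beta>)\<^sup>2/ (2 * \<sigma>\<^sup>2)
      = 2 * (-(\<alpha>-\<beta>)\<^sup>2/(8*\<sigma>\<^sup>2) + -(t - (\<alpha>+\<beta>)/2)\<^sup>2/ (2 * \<sigma>\<^sup>2))"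
    using assms by (simp add: field_simps power2_eq_square)
  have "?R\<^sup>2 = normal_density \<alpha> \<sigma> t * normal_density \<beta> \<sigma> t"
    unfolding normal_density_def
  proof -
    have "(exp (- (\<alpha> - \<beta>)\<^sup>2 / (8 * \<sigma>\<^sup>2)) * (1 / sqrt (2 * pi * \<sigma>\<^sup>2) * exp (- (t - (\<alpha> + \<beta>) / 2)\<^sup>2 / (2 * \<sigma>\<^sup>2))))\<^sup>2
        = (1 / sqrt (2 * pi * \<sigma>\<^sup>2))\<^sup>2 * exp (2 * (-(\<alpha>-\<beta>)\<^sup>2/(8*\<sigma>\<^sup>2) + -(t - (\<alpha>+\<beta>)/2)\<^sup>2/ (2 * \<sigma>\<^sup>2)))"
      by (simp add: power_mult_distrib exp_add[symmetric] power2_eq_square exp_double[symmetric] algebra_simps) (simp add: divide_simps algebra_simps)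
    also have "\<dots> = (1 / sqrt (2 * pi * \<sigma>\<^sup>2))\<^sup>2 * exp (-(t - \<alpha>)\<^sup>2/ (2 * \<sigma>\<^sup>2) + -(t - \<beta>)\<^sup>2/ (2 * \<sigma>\<^sup>2))"
      by (simp only: e)
    also have "\<dots> = 1 / sqrt (2 * pi * \<sigma>\<^sup>2) * exp (- (t - \<alpha>)\<^sup>2 / (2 * \<sigma>\<^sup>2)) *
        (1 / sqrt (2 * pi * \<sigma>\<^sup>2) * exp (- (t - \<beta>)\<^sup>2 / (2 * \<sigma>\<^sup>2)))"
      unfolding exp_add by (simp add: power2_eq_square)
    finally show "(exp (- (\<alpha> - \<beta>)\<^sup>2 / (8 * \<sigma>\<^sup>2)) * (1 / sqrt (2 * pi * \<sigma>\<^sup>2) * exp (- (t - (\<alpha> + \<beta>) / 2)\<^sup>2 / (2 * \<sigma>\<^sup>2))))\<^sup>2 =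
    1 / sqrt (2 * pi * \<sigma>\<^sup>2) * exp (- (t - \<alpha>)\<^sup>2 / (2 * \<sigma>\<^sup>2)) *
    (1 / sqrt (2 * pi * \<sigma>\<^sup>2) * exp (- (t - \<beta>)\<^sup>2 / (2 * \<sigma>\<^sup>2)))" .
  qed
  moreover have "0 \<le> ?R" by simp
  ultimately show ?thesis by (metis real_sqrt_unique)
qed

lemma gd_bhatt:
  fixes a b :: "real^'k"
  assumes "\<sigma> > 0"
  shows "sqrt (gd \<sigma> a x * gd \<sigma> b x) = exp (-(norm (a-b))\<^sup>2/(8*\<sigma>\<^sup>2)) * gd \<sigma> ((a+b)/\<^sub>R 2) x"
proof -
  have n: "(norm (a-b))\<^sup>2 = (\<Sum>i\<in>UNIV. (a$i - b$i)\<^sup>2)"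
    unfolding power2_norm_eq_inner inner_vec_def by (simp add: power2_eq_square)
  have "sqrt (gd \<sigma> a x * gd \<sigma> b x) = (\<Prod>i\<in>UNIV. sqrt (normal_density (a$i) \<sigma> (x$i) * normal_density (b$i) \<sigma> (x$i)))"
    unfolding gd_def prod.distrib[symmetric] by (subst sqrt_prod) auto
  also have "\<dots> = (\<Prod>i\<in>UNIV. exp (-(a$i-b$i)\<^sup>2/(8*\<sigma>\<^sup>2)) * normal_density ((a$i+b$i)/2) \<sigma> (x$i))"
    by (simp add: nd_bhatt[OF assms])
  also have "\<dots> = exp (-(norm (a-b))\<^sup>2/(8*\<sigma>\<^sup>2)) * gd \<sigma> ((a+b)/\<^sub>R 2) x"
  proof -
    have "exp (-(norm (a-b))\<^sup>2/(8*\<sigma>\<^sup>2)) = (\<Prod>i\<in>UNIV. exp (-(a$i-b$i)\<^sup>2/(8*\<sigma>\<^sup>2)))"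
      unfolding n by (simp add: exp_sum[symmetric] sum_divide_distrib sum_negf)
    then show ?thesis unfolding prod.distrib gd_def by (simp add: add_divide_distrib)
  qed
  finally show ?thesis .
qed

lemma gaussian_iso_gd: "gaussian_iso \<sigma> = density lborel (\<lambda>x. ennreal (gd \<sigma> 0 x))"
  unfolding gaussian_iso_def gd_def by simp

lemma distr_gaussian_plus:
  fixes a :: "real^'k"
  shows "distr (gaussian_iso \<sigma>) borel ((+) a) = density lborel (\<lambda>x. ennreal (gd \<sigma> a x))"
proof -
  have "density lborel (\<lambda>x. ennreal (gd \<sigma> a x))
      = density (distr lborel borel ((+) a)) (\<lambda>x. ennreal (gd \<sigma> a x))"
    by (simp add: lborel_distr_plus)
  also have "\<dots> = distr (density lborel (\<lambda>x. ennreal (gd \<sigma> a (a + x)))) borel ((+) a)"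
    by (rule density_distr) auto
  also have "(\<lambda>x. ennreal (gd \<sigma> a (a + x))) = (\<lambda>x. ennreal (gd \<sigma> 0 x))"
    by (simp add: gd_def normal_density_def)
  finally show ?thesis by (simp add: gaussian_iso_gd)
qed

lemma gd_integrable: "\<sigma> > 0 \<Longrightarrow> integrable lborel (gd \<sigma> (c::real^'k))"
  by (rule integrableI_nonneg) (auto simp: gd_nonneg gd_nn)

lemma gd_integral: "\<sigma> > 0 \<Longrightarrow> (\<integral>x. gd \<sigma> (c::real^'k) x \<partial>lborel) = 1"
  using nn_integral_eq_integral[OF gd_integrable, of \<sigma> c] gd_nn[of \<sigma> c] by (simp add: gd_nonneg)

lemma int_shift:
  fixes a :: "real^'k" and f :: "real^'k \<Rightarrow> real"
  assumes f[measurable]: "f \<in> borel_measurable borel"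
  shows "(\<integral>x. f (a + x) \<partial>gaussian_iso \<sigma>) = (\<integral>x. gd \<sigma> a x * f x \<partial>lborel)"
proof -
  have "(\<integral>x. f (a + x) \<partial>gaussian_iso \<sigma>) = (\<integral>x. f x \<partial>distr (gaussian_iso \<sigma>) borel ((+) a))"
    by (rule integral_distr[symmetric]) (auto simp: gaussian_iso_def)
  also have "\<dots> = (\<integral>x. gd \<sigma> a x * f x \<partial>lborel)"
    unfolding distr_gaussian_plus by (subst integral_density) (auto simp: gd_nonneg)
  finally show ?thesis .
qed

lemma pointwise:
  fixes p q f l :: real
  assumes "0 \<le> p" "0 \<le> q" "\<bar>f\<bar> \<le> 1" "l > 0"
  shows "\<bar>p * f - q * f\<bar> \<le> l/2 * (p + q - 2 * sqrt (p * q)) + (p + q) / l"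
proof -
  define u v where "u = sqrt p" and "v = sqrt q"
  have u: "u \<ge> 0" "p = u\<^sup>2" and v: "v \<ge> 0" "q = v\<^sup>2" using assms by (auto simp: u_def v_def)
  have pq: "sqrt (p * q) = u * v" by (simp add: u_def v_def real_sqrt_mult)
  have "\<bar>p * f - q * f\<bar> = \<bar>p - q\<bar> * \<bar>f\<bar>" by (simp add: abs_mult left_diff_distrib[symmetric])
  also have "\<dots> \<le> \<bar>p - q\<bar>" using assms by (simp add: mult_left_le)
  also have "\<bar>p - q\<bar> = \<bar>u - v\<bar> * (u + v)"
  proof -
    have "p - q = (u - v) * (u + v)" using u v by (simp add: power2_eq_square algebra_simps)
    thus ?thesis using u v by (simp add: abs_mult)
  qed
  also have "\<dots> \<le> l/2 * (u - v)\<^sup>2 + (u + v)\<^sup>2 / (2 * l)"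
  proof -
    have "0 \<le> (l * \<bar>u - v\<bar> - (u + v))\<^sup>2 / l" using assms by simp
    also have "\<dots> = l * (u - v)\<^sup>2 - 2 * (\<bar>u - v\<bar> * (u + v)) + (u + v)\<^sup>2 / l"
      using assms by (simp add: power2_eq_square field_simps abs_mult_self_eq)
    finally show ?thesis by (simp add: field_simps)
  qed
  also have "\<dots> \<le> l/2 * (p + q - 2 * sqrt (p * q)) + (p + q) / l"
  proof -
    have "0 \<le> (u - v)\<^sup>2" by simp
    hence "(u + v)\<^sup>2 \<le> 2 * (u\<^sup>2 + v\<^sup>2)" by (simp add: power2_eq_square algebra_simps)
    hence e2: "(u + v)\<^sup>2 / (2 * l) \<le> (p + q) / l" using u v assms by (simp add: divide_simps)
    have e1: "(u - v)\<^sup>2 = p + q - 2 * sqrt (p * q)" using u v pq by (simp add: power2_eq_square algebra_simps)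
    show ?thesis using e1 e2 by simp
  qed
  finally show ?thesis .
qed

lemma key:
  fixes a b :: "real^'k" and f :: "real^'k \<Rightarrow> real"
  assumes \<sigma>: "\<sigma> > 0" and f[measurable]: "f \<in> borel_measurable borel" and fb: "\<And>x. \<bar>f x\<bar> \<le> 1"
  shows "\<bar>(\<integral>x. f (a + x) \<partial>gaussian_iso \<sigma>) - (\<integral>x. f (b + x) \<partial>gaussian_iso \<sigma>)\<bar> \<le> norm (a - b) / \<sigma>"
proof (cases "a = b")
  case True then show ?thesis by simp
next
  case False
  define d where "d = norm (a - b)"
  have d: "d > 0" using False by (simp add: d_def)
  define l where "l = 4 * \<sigma> / d"
  have l: "l > 0" using d \<sigma> by (simp add: l_def)
  define B where "B = exp (-d\<^sup>2/(8*\<sigma>\<^sup>2))"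
  let ?p = "gd \<sigma> a" and ?q = "gd \<sigma> b"
  have ip: "integrable lborel ?p" and iq: "integrable lborel ?q" using \<sigma> by (auto intro: gd_integrable)
  have ipf: "integrable lborel (\<lambda>x. ?p x * f x)"
    by (rule Bochner_Integration.integrable_bound[OF ip]) (auto simp: abs_mult gd_nonneg fb intro!: mult_left_le)
  have iqf: "integrable lborel (\<lambda>x. ?q x * f x)"
    by (rule Bochner_Integration.integrable_bound[OF iq]) (auto simp: abs_mult gd_nonneg fb intro!: mult_left_le)
  have sq: "sqrt (?p x * ?q x) = B * gd \<sigma> ((a+b)/\<^sub>R 2) x" for x
    using gd_bhatt[OF \<sigma>] by (simp add: B_def d_def)
  have isq: "integrable lborel (\<lambda>x. sqrt (?p x * ?q x))"
    unfolding sq by (intro integrable_mult_right gd_integrable \<sigma>)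
  have intsq: "(\<integral>x. sqrt (?p x * ?q x) \<partial>lborel) = B"
    unfolding sq integral_mult_right_zero gd_integral[OF \<sigma>] by simp
  let ?R = "\<lambda>x. l/2 * (?p x + ?q x - 2 * sqrt (?p x * ?q x)) + (?p x + ?q x) / l"
  have iR: "integrable lborel ?R" using ip iq isq by simp
  have intR: "(\<integral>x. ?R x \<partial>lborel) = l/2 * (2 - 2 * B) + 2 / l"
    using ip iq isq intsq gd_integral[OF \<sigma>, of a] gd_integral[OF \<sigma>, of b] by simp
  have "\<bar>(\<integral>x. f (a + x) \<partial>gaussian_iso \<sigma>) - (\<integral>x. f (b + x) \<partial>gaussian_iso \<sigma>)\<bar>
      = \<bar>\<integral>x. ?p x * f x - ?q x * f x \<partial>lborel\<bar>"
    by (simp add: int_shift ipf iqf)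
  also have "\<dots> \<le> (\<integral>x. ?R x \<partial>lborel)"
    by (rule integral_abs_bound_integral[OF Bochner_Integration.integrable_diff[OF ipf iqf] iR])
       (rule pointwise[OF gd_nonneg gd_nonneg fb l])
  also have "\<dots> \<le> d / \<sigma>"
  proof -
    have "1 - B \<le> d\<^sup>2/(8*\<sigma>\<^sup>2)" using exp_ge_add_one_self[of "-d\<^sup>2/(8*\<sigma>\<^sup>2)"] by (simp add: B_def)
    hence "l * (1 - B) \<le> l * (d\<^sup>2/(8*\<sigma>\<^sup>2))" using l by (intro mult_left_mono) auto
    also have "\<dots> = d / (2 * \<sigma>)" using d \<sigma> by (simp add: l_def field_simps power2_eq_square)
    finally have "l * (1 - B) \<le> d / (2 * \<sigma>)" .
    moreover have "2 / l = d / (2 * \<sigma>)" using d \<sigma> by (simp add: l_def field_simps)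
    moreover have "l/2 * (2 - 2 * B) + 2 / l = l * (1 - B) + 2 / l" by (simp add: algebra_simps)
    moreover have "d / (2 * \<sigma>) + d / (2 * \<sigma>) = d / \<sigma>" by (simp add: field_simps)
    ultimately show ?thesis unfolding intR by linarith
  qed
  finally show ?thesis by (simp add: d_def)
qed

lemma sets_gaussian_iso[measurable_cong]: "sets (gaussian_iso \<sigma>) = sets borel"
  by (simp add: gaussian_iso_def)

lemma sgd_bound:
  assumes "\<And>t. gamma_bounded \<gamma> (G s t)"
  shows "norm (sgd_iter G w0 s t - w0) \<le> real t * sqrt \<gamma>"
proof (induction t)
  case 0 then show ?case by simp
next
  case (Suc t)
  have "norm (sgd_iter G w0 s (Suc t) - w0)
      \<le> norm (G s t (sgd_iter G w0 s t) - sgd_iter G w0 s t) + norm (sgd_iter G w0 s t - w0)"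
    using norm_triangle_ineq[of "G s t (sgd_iter G w0 s t) - sgd_iter G w0 s t" "sgd_iter G w0 s t - w0"]
    by simp
  also have "\<dots> \<le> sqrt \<gamma> + real t * sqrt \<gamma>"
    using assms[of t] Suc by (intro add_mono) (auto simp: gamma_bounded_def)
  finally show ?case by (simp add: algebra_simps)
qed

theorem lemma2:
  fixes P :: "'z measure"
    and loss :: "real ^ 'k \<Rightarrow> 'z \<Rightarrow> real"
    and G :: "(nat \<Rightarrow> 'z) \<Rightarrow> nat \<Rightarrow> real ^ 'k \<Rightarrow> real ^ 'k"
    and w0 :: "real ^ 'k"
    and n T :: nat and \<gamma> \<sigma> :: real
  assumes n: "n \<ge> 2"
    and P: "prob_space P"
    and loss_meas: "(\<lambda>(w, z). loss w z) \<in> borel_measurable (borel \<Otimes>\<^sub>M P)"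
    and loss_range: "\<And>w z. z \<in> space P \<Longrightarrow> loss w z \<in> {0..1}"
    and G_bdd: "\<And>s t. s \<in> space (PiM {..<n-1} (\<lambda>_. P)) \<Longrightarrow> gamma_bounded \<gamma> (G s t)"
    and A_meas: "(\<lambda>s. sgd_iter G w0 s T) \<in> borel_measurable (PiM {..<n-1} (\<lambda>_. P))"
    and \<sigma>: "\<sigma> > 0"
  shows "gen_noisy P loss (n-1) (\<lambda>s. sgd_iter G w0 s T) \<sigma>
           \<le> sqrt ((real n / (real n - 1))\<^sup>2 * (real T)\<^sup>2 * \<gamma> / \<sigma>\<^sup>2)"
proof -
  define m where "m = n - 1"
  have m: "m \<ge> 1" using n by (simp add: m_def)
  define S where "S = PiM {..<m} (\<lambda>_. P)"
  define Q :: "(real^'k) measure" where "Q = gaussian_iso \<sigma>"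
  define A where "A = (\<lambda>s. sgd_iter G w0 s T)"
  interpret P: prob_space P by (rule P)
  interpret S: prob_space S unfolding S_def by (rule prob_space_PiM) (rule P)
  interpret Q: prob_space Q
    by (rule prob_spaceI) (simp add: Q_def gaussian_iso_gd emeasure_density gd_nn \<sigma>)
  interpret SQ: pair_prob_space S Q ..
  have sQ[measurable_cong]: "sets Q = sets borel" by (simp add: Q_def gaussian_iso_def)
  have [measurable]: "A \<in> borel_measurable S" using A_meas by (simp add: A_def S_def m_def)
  note loss_meas[measurable]
  define h where "h s w = pop_risk P loss w - emp_risk loss w m s" for s w
  have pop_meas[measurable]: "(\<lambda>w. pop_risk P loss w) \<in> borel_measurable borel"
    unfolding pop_risk_def by (rule P.borel_measurable_lebesgue_integral) (rule loss_meas)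
  have h_meas[measurable]: "(\<lambda>(s, w). h s w) \<in> borel_measurable (S \<Otimes>\<^sub>M borel)"
    unfolding h_def emp_risk_def S_def by measurable
  have spaceS: "s i \<in> space P" if "s \<in> space S" "i < m" for s i
    using that by (auto simp: S_def space_PiM)
  have pop_int: "integrable P (loss w)" for w
  proof (rule P.integrable_const_bound[where B=1])
    show "AE x in P. norm (loss w x) \<le> 1" using loss_range[of _ w] by (intro AE_I2) force
  qed measurable
  have pop_bd: "pop_risk P loss w \<in> {0..1}" for w
  proof -
    have "0 \<le> pop_risk P loss w" unfolding pop_risk_def
      by (intro integral_nonneg_AE AE_I2) (auto dest: loss_range[of _ w])
    moreover have "pop_risk P loss w \<le> (\<integral>z. 1 \<partial>P)" unfolding pop_risk_def
      by (intro integral_mono pop_int) (auto dest: loss_range[of _ w])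
    ultimately show ?thesis by (simp add: P.prob_space)
  qed
  have emp_bd: "emp_risk loss w m s \<in> {0..1}" if "s \<in> space S" for w s
  proof -
    have lr: "\<And>i. i < m \<Longrightarrow> loss w (s i) \<in> {0..1}" using loss_range spaceS[OF that] by blast
    have "(\<Sum>i<m. loss w (s i)) \<le> (\<Sum>i<m. 1)"
      by (intro sum_mono) (use lr in auto)
    moreover have "0 \<le> (\<Sum>i<m. loss w (s i))"
      by (intro sum_nonneg) (use lr in auto)
    ultimately show ?thesis using m by (auto simp: emp_risk_def)
  qed
  have h_bd: "\<bar>h s w\<bar> \<le> 1" if "s \<in> space S" for s w
    using pop_bd[of w] emp_bd[OF that, of w] by (auto simp: h_def)
  have h_zero: "(\<integral>s. h s w \<partial>S) = 0" for w
  proof -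
    have comp: "(\<integral>s. loss w (s i) \<partial>S) = pop_risk P loss w" if "i < m" for i
    proof -
      have "(\<integral>s. loss w (s i) \<partial>S) = (\<integral>z. loss w z \<partial>distr S P (\<lambda>s. s i))"
        by (rule integral_distr[symmetric]) (auto simp: S_def that)
      also have "distr S P (\<lambda>s. s i) = P"
        unfolding S_def by (rule distr_PiM_component) (auto simp: that P)
      finally show ?thesis by (simp add: pop_risk_def)
    qed
    have int_i: "integrable S (\<lambda>s. loss w (s i))" if "i < m" for i
    proof (rule S.integrable_const_bound[where B=1])
      show "AE x in S. norm (loss w (x i)) \<le> 1"
        using loss_range[of _ w] spaceS[OF _ that] by (intro AE_I2) force
    qed (simp add: S_def that)
    have "(\<integral>s. h s w \<partial>S) = pop_risk P loss w - (1 / real m) * (\<Sum>i<m. \<integral>s. loss w (s i) \<partial>S)"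
    proof -
      have iX: "integrable S (\<lambda>s. \<Sum>i<m. loss w (s i))" by (intro Bochner_Integration.integrable_sum) (use int_i in auto)
      have sX: "(\<integral>s. (\<Sum>i<m. loss w (s i)) \<partial>S) = (\<Sum>i<m. \<integral>s. loss w (s i) \<partial>S)"
        by (rule Bochner_Integration.integral_sum) (use int_i in auto)
      show ?thesis unfolding h_def emp_risk_def
        by (subst Bochner_Integration.integral_diff) (use iX sX S.prob_space in auto)
    qed
    also have "\<dots> = 0" using m by (simp add: comp)
    finally show ?thesis .
  qed
  have H_int: "integrable (S \<Otimes>\<^sub>M Q) (\<lambda>p. h (fst p) (a (fst p) + snd p))"
    if [measurable]: "a \<in> borel_measurable S" for a :: "_ \<Rightarrow> real^'k"
    by (rule SQ.P.integrable_const_bound[where B=1]) (auto simp: space_pair_measure h_bd)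
  have gen_eq: "gen_noisy P loss (n-1) A \<sigma> = \<bar>\<integral>s. (\<integral>x. h s (A s + x) \<partial>Q) \<partial>S\<bar>"
  proof -
    have e1: "gen_noisy P loss (n-1) A \<sigma> = \<bar>\<integral>p. h (fst p) (A (fst p) + snd p) \<partial>(S \<Otimes>\<^sub>M Q)\<bar>"
      unfolding gen_noisy_def h_def S_def Q_def m_def ..
    have e2: "(\<integral>s. (\<integral>x. h s (A s + x) \<partial>Q) \<partial>S) = (\<integral>p. h (fst p) (A (fst p) + snd p) \<partial>(S \<Otimes>\<^sub>M Q))"
      using SQ.integral_fst'[OF H_int, of A] by simp
    show ?thesis unfolding e1 e2 ..
  qed
  have zero: "(\<integral>s. (\<integral>x. h s (w0 + x) \<partial>Q) \<partial>S) = 0"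
  proof -
    have "(\<integral>s. (\<integral>x. h s (w0 + x) \<partial>Q) \<partial>S) = (\<integral>x. (\<integral>s. h s (w0 + x) \<partial>S) \<partial>Q)"
      using SQ.Fubini_integral[of "\<lambda>s x. h s (w0 + x)"] H_int[of "\<lambda>_. w0"] by (simp add: case_prod_beta')
    also have "\<dots> = 0" by (simp add: h_zero)
    finally show ?thesis .
  qed
  have iA: "integrable S (\<lambda>s. \<integral>x. h s (A s + x) \<partial>Q)"
    using SQ.integrable_fst'[OF H_int, of A] by simp
  have i0: "integrable S (\<lambda>s. \<integral>x. h s (w0 + x) \<partial>Q)"
    using SQ.integrable_fst'[OF H_int, of "\<lambda>_. w0"] by simp
  obtain s0 where s0: "s0 \<in> space S" using S.not_empty by blast
  have "0 \<le> sqrt \<gamma>"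
  proof -
    have "gamma_bounded \<gamma> (G s0 0)" using G_bdd[of s0 0] s0 by (simp add: S_def m_def)
    hence "norm (G s0 0 w0 - w0) \<le> sqrt \<gamma>" by (simp add: gamma_bounded_def)
    thus ?thesis using norm_ge_zero order_trans by blast
  qed
  hence \<gamma>0: "\<gamma> \<ge> 0" by simp
  define C where "C = real T * sqrt \<gamma> / \<sigma>"
  have diff_bd: "\<bar>(\<integral>x. h s (A s + x) \<partial>Q) - (\<integral>x. h s (w0 + x) \<partial>Q)\<bar> \<le> C" if s: "s \<in> space S" for s
  proof -
    have "\<bar>(\<integral>x. h s (A s + x) \<partial>Q) - (\<integral>x. h s (w0 + x) \<partial>Q)\<bar> \<le> norm (A s - w0) / \<sigma>"
    proof -
      have hm: "(\<lambda>w. h s w) \<in> borel_measurable borel"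
        using measurable_Pair_compose_split[OF h_meas measurable_const[OF s] measurable_ident_sets[OF refl]] .
      show ?thesis unfolding Q_def by (rule key[OF \<sigma> hm h_bd[OF s]])
    qed
    also have "\<dots> \<le> C" unfolding C_def A_def
      using sgd_bound[of \<gamma> G s w0 T] G_bdd s \<sigma> by (intro divide_right_mono) (auto simp: S_def m_def)
    finally show ?thesis .
  qed
  have "gen_noisy P loss (n-1) A \<sigma> = \<bar>\<integral>s. (\<integral>x. h s (A s + x) \<partial>Q) - (\<integral>x. h s (w0 + x) \<partial>Q) \<partial>S\<bar>"
    unfolding gen_eq using iA i0 zero by simp
  also have "\<dots> \<le> C"
  proof -
    have "(\<integral>s. (\<integral>x. h s (A s + x) \<partial>Q) - (\<integral>x. h s (w0 + x) \<partial>Q) \<partial>S) \<le> (\<integral>s. C \<partial>S)"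
      by (rule integral_mono) (use iA i0 in \<open>auto dest!: diff_bd simp: abs_le_iff\<close>)
    moreover have "(\<integral>s. - C \<partial>S) \<le> (\<integral>s. (\<integral>x. h s (A s + x) \<partial>Q) - (\<integral>x. h s (w0 + x) \<partial>Q) \<partial>S)"
      by (rule integral_mono) (use iA i0 in \<open>auto dest!: diff_bd simp: abs_le_iff\<close>)
    ultimately show ?thesis by (simp add: abs_le_iff S.prob_space)
  qed
  also have "\<dots> \<le> sqrt ((real n / (real n - 1))\<^sup>2 * (real T)\<^sup>2 * \<gamma> / \<sigma>\<^sup>2)"
  proof -
    have c1: "real n / (real n - 1) \<ge> 1" using n by (simp add: field_simps)
    have "sqrt ((real n / (real n - 1))\<^sup>2 * (real T)\<^sup>2 * \<gamma> / \<sigma>\<^sup>2) = (real n / (real n - 1)) * C"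
      using c1 \<sigma> \<gamma>0 n by (simp add: C_def real_sqrt_mult real_sqrt_divide)
    moreover have C0: "C \<ge> 0" using \<sigma> \<gamma>0 by (simp add: C_def)
    moreover have "C \<le> (real n / (real n - 1)) * C" using mult_right_mono[OF c1 C0] by simp
    ultimately show ?thesis by linarith
  qed
  finally show ?thesis by (simp add: A_def)
qed

end
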